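(* Let $A$ and $B=\{b_1,\ldots,b_m\}$ be finite point sets in $\mathbb{R}^2$ with $m\le|A|$, let $t\in\mathbb{R}^2$, and let $\mathcal{L}=\{L_t(b_i)\mid i=1,\ldots,m\}$ be the preference lists at $t$. Let $a_1,\ldots,a_m$ be $m$ distinct points of $A$, and suppose that for some $0\le j\le m-1$: (a) $L_t(b_i)$ starts with $(a_1,a_2,\ldots,a_j)$ for $i=1,\ldots,j$; (b) $L_t(b_{j+1})$ starts with $a_{j+1}$; (c) $L_t(b_i)$ starts with $(a_{j+2},\ldots,a_m)$ for $i=j+2,\ldots,m$. Then every efficient matching for $\mathcal{L}$ matches $B$ onto $\{a_1,\ldots,a_m\}$.
   Context: The preference list $L_t(b)$ of $b\in B$ is the list of all points of $A$ sorted by increasing distance from $b+t$ (a strict ordering, ties broken in some fixed way). A matching is an injective map $\pi:B\to A$. A matching $\pi$ is better than a distinct matching $\sigma$ if for each $b\in B$ either $\pi(b)=\sigma(b)$ or $\pi(b)$ appears before $\sigma(b)$ in $L_t(b)$. A matching is efficient if no matching is better than it. *)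

theory Defs
  imports "HOL-Analysis.Analysis" "HOL-Library.Sublist"
begin

type_synonym point = "real ^ 2"

definition pref_list :: "point set \<Rightarrow> point \<Rightarrow> point \<Rightarrow> point list \<Rightarrow> bool" where
  "pref_list A t b L \<longleftrightarrow> distinct L \<and> set L = A \<and>
     sorted_wrt (\<lambda>x y. dist x (b + t) \<le> dist y (b + t)) L"

definition before :: "point list \<Rightarrow> point \<Rightarrow> point \<Rightarrow> bool" where
  "before L x y \<longleftrightarrow> (\<exists>i k. i < k \<and> k < length L \<and> L ! i = x \<and> L ! k = y)"

definition matching :: "point set \<Rightarrow> point set \<Rightarrow> (point \<Rightarrow> point) \<Rightarrow> bool" where
  "matching A B \<pi> \<longleftrightarrow> inj_on \<pi> B \<and> \<pi> ` B \<subseteq> A"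

definition better :: "point set \<Rightarrow> (point \<Rightarrow> point list) \<Rightarrow> (point \<Rightarrow> point) \<Rightarrow> (point \<Rightarrow> point) \<Rightarrow> bool" where
  "better B L \<pi> \<sigma> \<longleftrightarrow> (\<exists>b\<in>B. \<pi> b \<noteq> \<sigma> b) \<and>
     (\<forall>b\<in>B. \<pi> b = \<sigma> b \<or> before (L b) (\<pi> b) (\<sigma> b))"

definition efficient :: "point set \<Rightarrow> point set \<Rightarrow> (point \<Rightarrow> point list) \<Rightarrow> (point \<Rightarrow> point) \<Rightarrow> bool" where
  "efficient A B L \<pi> \<longleftrightarrow> matching A B \<pi> \<and> \<not> (\<exists>\<sigma>. matching A B \<sigma> \<and> better B L \<sigma> \<pi>)"

end

theory Submission
  imports Defs
begin

lemma before_prefix: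
  assumes "prefix p L" "x \<in> set p" "y \<in> set L" "y \<notin> set p"
  shows "before L x y"
proof -
  obtain r where L: "L = p @ r" using assms(1) prefixE by blast
  obtain i where i: "i < length p" "p ! i = x" using assms(2) by (metis in_set_conv_nth)
  obtain k where k: "k < length L" "L ! k = y" using assms(3) by (metis in_set_conv_nth)
  have "\<not> k < length p"
  proof
    assume "k < length p"
    then have "L ! k = p ! k" by (simp add: L nth_append)
    then show False using k assms(4) \<open>k < length p\<close> by (metis nth_mem)
  qed
  then have "i < k" using i by simp
  moreover have "L ! i = x" using i by (simp add: L nth_append)
  ultimately show ?thesis unfolding before_def using k by blast
qed

lemma group_lemma:
  fixes A :: "point set" and b a :: "nat \<Rightarrow> point" and m :: nat
    and L :: "point \<Rightarrow> point list" and p :: "point list" and I :: "nat set"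
  assumes b_inj: "inj_on b {1..m}"
    and a_inj: "inj_on a {1..m}"
    and a_in: "a ` {1..m} \<subseteq> A"
    and I: "I \<subseteq> {1..m}" "k \<in> I"
    and pre: "\<forall>i\<in>I. prefix p (L (b i))"
    and setp: "set p = a ` I"
    and Lset: "\<forall>i\<in>I. set (L (b i)) = A"
    and eff: "efficient A (b ` {1..m}) L \<pi>"
    and notin: "a k \<notin> \<pi> ` (b ` {1..m})"
  shows False
proof -
  let ?B = "b ` {1..m}"
  have match: "matching A ?B \<pi>" using eff unfolding efficient_def by blast
  have finI: "finite I" using I(1) finite_subset by blast
  show False
  proof (cases "\<exists>i\<in>I. \<pi> (b i) \<notin> a ` I")
    case True
    then obtain i where i: "i \<in> I" "\<pi> (b i) \<notin> a ` I" by blast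
    define \<sigma> where "\<sigma> = \<pi>(b i := a k)"
    have biB: "b i \<in> ?B" using i I by blast
    have akA: "a k \<in> A" using a_in I by blast
    have "matching A ?B \<sigma>"
    proof -
      have "inj_on \<pi> ?B" "\<pi> ` ?B \<subseteq> A" using match unfolding matching_def by auto
      then have "inj_on \<sigma> ?B"
        unfolding \<sigma>_def using notin by (simp add: inj_on_fun_updI)
      moreover have "\<sigma> ` ?B \<subseteq> A" unfolding \<sigma>_def using \<open>\<pi> ` ?B \<subseteq> A\<close> akA
        by (auto simp: fun_upd_image)
      ultimately show ?thesis unfolding matching_def by blast
    qed
    moreover have "better ?B L \<sigma> \<pi>"
    proof -
      have ne: "\<sigma> (b i) \<noteq> \<pi> (b i)" using notin biB unfolding \<sigma>_def
        by (metis fun_upd_same image_eqI)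
      have "\<pi> (b i) \<in> A" using match biB unfolding matching_def by blast
      have "before (L (b i)) (a k) (\<pi> (b i))"
      proof (rule before_prefix)
        show "prefix p (L (b i))" using pre i(1) by blast
        show "a k \<in> set p" using setp I(2) by blast
        show "\<pi> (b i) \<in> set (L (b i))" using Lset i(1) \<open>\<pi> (b i) \<in> A\<close> by blast
        show "\<pi> (b i) \<notin> set p" using setp i(2) by simp
      qed
      then show ?thesis unfolding better_def \<sigma>_def using ne biB \<sigma>_def by auto
    qed
    ultimately show False using eff unfolding efficient_def by blast
  next
    case False
    then have sub: "(\<pi> \<circ> b) ` I \<subseteq> a ` I - {a k}" using notin I by (auto, metis atLeastAtMost_iff image_eqI subsetD)
    have "inj_on (\<pi> \<circ> b) I"
    proof (rule comp_inj_on)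
      show "inj_on b I" using b_inj I inj_on_subset by blast
      show "inj_on \<pi> (b ` I)" using match I unfolding matching_def
        by (meson image_mono inj_on_subset)
    qed
    then have c1: "card ((\<pi> \<circ> b) ` I) = card I" by (rule card_image)
    have "card (a ` I) = card I" using a_inj I inj_on_subset card_image by blast
    then have "card (a ` I - {a k}) = card I - 1" using I by simp
    moreover have "card ((\<pi> \<circ> b) ` I) \<le> card (a ` I - {a k})"
      using sub finI by (simp add: card_mono)
    moreover have "card I > 0" using finI I card_gt_0_iff by blast
    ultimately show False using c1 by simp
  qed
qed

theorem lemma7:
  fixes A :: "point set" and b a :: "nat \<Rightarrow> point" and m j :: nat
    and t :: point and L :: "point \<Rightarrow> point list"
  assumes finA: "finite A"
    and b_inj: "inj_on b {1..m}"
    and m_le: "m \<le> card A"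
    and L_pref: "\<forall>x\<in>b ` {1..m}. pref_list A t x (L x)"
    and a_inj: "inj_on a {1..m}"
    and a_in: "a ` {1..m} \<subseteq> A"
    and j_lt: "j < m"
    and ha: "\<forall>i\<in>{1..j}. prefix (map a [1..<j+1]) (L (b i))"
    and hb: "prefix [a (j+1)] (L (b (j+1)))"
    and hc: "\<forall>i\<in>{j+2..m}. prefix (map a [j+2..<m+1]) (L (b i))"
  shows "\<forall>\<pi>. efficient A (b ` {1..m}) L \<pi> \<longrightarrow> \<pi> ` (b ` {1..m}) = a ` {1..m}"
proof (intro allI impI)
  fix \<pi> assume eff: "efficient A (b ` {1..m}) L \<pi>"
  have match: "matching A (b ` {1..m}) \<pi>" using eff unfolding efficient_def by blast
  have Lset: "\<forall>i\<in>{1..m}. set (L (b i)) = A" using L_pref pref_list_def by auto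
  have c1: "card (\<pi> ` (b ` {1..m})) = m"
    using match b_inj unfolding matching_def by (simp add: card_image)
  have c2: "card (a ` {1..m}) = m" using a_inj by (simp add: card_image)
  show "\<pi> ` (b ` {1..m}) = a ` {1..m}"
  proof (rule ccontr)
    assume ne: "\<pi> ` (b ` {1..m}) \<noteq> a ` {1..m}"
    have "\<not> a ` {1..m} \<subseteq> \<pi> ` (b ` {1..m})"
      using ne c1 c2 card_subset_eq by (metis finite_atLeastAtMost finite_imageI)
    then obtain k where k: "k \<in> {1..m}" "a k \<notin> \<pi> ` (b ` {1..m})" by blast
    consider "k \<le> j" | "k = j+1" | "k \<ge> j+2" by linarith
    then show False
    proof cases
      case 1
      have "prefix (map a [1..<j+1]) (L (b i))" if "i \<in> {1..j}" for i using ha that by blast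
      moreover have "set (map a [1..<j+1]) = a ` {1..j}" by auto
      moreover have "{1..j} \<subseteq> {1..m}" "k \<in> {1..j}" using k 1 j_lt by auto
      moreover have "\<forall>i\<in>{1..j}. set (L (b i)) = A" using Lset j_lt by auto
      ultimately show False
        using group_lemma[OF b_inj a_inj a_in, where I="{1..j}" and p="map a [1..<j+1]"
            and k=k and L=L and \<pi>=\<pi>] eff k(2) by blast
    next
      case 2
      have "set [a (j+1)] = a ` {j+1}" by simp
      moreover have "{j+1} \<subseteq> {1..m}" "k \<in> {j+1}" using k 2 j_lt by auto
      moreover have "\<forall>i\<in>{j+1}. set (L (b i)) = A" using Lset j_lt by auto
      moreover have "\<forall>i\<in>{j+1}. prefix [a (j+1)] (L (b i))" using hb by simp
      ultimately show False
        using group_lemma[OF b_inj a_inj a_in, where I="{j+1}" and p="[a (j+1)]"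
            and k=k and L=L and \<pi>=\<pi>] eff k(2) by blast
    next
      case 3
      have "set (map a [j+2..<m+1]) = a ` {j+2..m}" by auto
      moreover have "{j+2..m} \<subseteq> {1..m}" "k \<in> {j+2..m}" using k 3 by auto
      moreover have "\<forall>i\<in>{j+2..m}. set (L (b i)) = A" using Lset by auto
      ultimately show False
        using group_lemma[OF b_inj a_inj a_in, where I="{j+2..m}" and p="map a [j+2..<m+1]"
            and k=k and L=L and \<pi>=\<pi>] eff k(2) hc by blast
    qed
  qed
qed

end
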